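(* Let $M$ be a transversal matroid with presentation $\mathcal A=(A_1,\ldots,A_r)$. Let $i\in[r]$ and let $B_i\subseteq E(M)$ with $\mathrm{cl}^*(B_i)=\mathrm{cl}^*(A_i)$. Suppose further that for every $B\subseteq E(M)$ with $B_i\subseteq B$ and $A_i\not\subseteq B$, we have $r^*_M(B)<|B|-|\mathcal A(B)|$. Then $(A_1,\ldots,A_{i-1},B_i,A_{i+1},\ldots,A_r)$ is a presentation of $M$.
   Context: A presentation $\mathcal A$ of a transversal matroid $M$ means $M=M[\mathcal A]$, whose independent sets are the partial transversals of $\mathcal A$. $\mathrm{cl}^*$ and $r^*_M$ are the closure and rank functions of the dual $M^*$. For $X\subseteq E(M)$, $\mathcal A(X)=\{j\in[r]: A_j\subseteq X\}$. *)

theory Defs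
  imports Main
begin

text \<open>A presentation is a family A indexed by {0..<r} (standing for [r]).
  X is a partial transversal of A iff there is an injection f of X into {0..<r}
  with x in A (f x) for every x in X.\<close>
definition partial_transversal :: "nat \<Rightarrow> (nat \<Rightarrow> 'a set) \<Rightarrow> 'a set \<Rightarrow> bool" where
  "partial_transversal r A X \<longleftrightarrow>
     (\<exists>f. inj_on f X \<and> (\<forall>x\<in>X. f x < r \<and> x \<in> A (f x)))"

definition tm_indep :: "'a set \<Rightarrow> nat \<Rightarrow> (nat \<Rightarrow> 'a set) \<Rightarrow> 'a set \<Rightarrow> bool" where
  "tm_indep E r A X \<longleftrightarrow> X \<subseteq> E \<and> partial_transversal r A X"

definition mrank :: "('a set \<Rightarrow> bool) \<Rightarrow> 'a set \<Rightarrow> nat" where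
  "mrank indep X = Max {card Y | Y. Y \<subseteq> X \<and> indep Y}"

definition dual_rank :: "'a set \<Rightarrow> ('a set \<Rightarrow> bool) \<Rightarrow> 'a set \<Rightarrow> int" where
  "dual_rank E indep X = int (card X) + int (mrank indep (E - X)) - int (mrank indep E)"

definition dual_cl :: "'a set \<Rightarrow> ('a set \<Rightarrow> bool) \<Rightarrow> 'a set \<Rightarrow> 'a set" where
  "dual_cl E indep X = {e \<in> E. dual_rank E indep (insert e X) = dual_rank E indep X}"

definition calA :: "nat \<Rightarrow> (nat \<Rightarrow> 'a set) \<Rightarrow> 'a set \<Rightarrow> nat set" where
  "calA r A X = {j. j < r \<and> A j \<subseteq> X}"

end

theory Submission
  imports Defs
begin

definition mt :: "nat \<Rightarrow> (nat \<Rightarrow> 'a set) \<Rightarrow> 'a set \<Rightarrow> ('a \<Rightarrow> nat) \<Rightarrow> bool" where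
  "mt r A X f \<longleftrightarrow> inj_on f X \<and> (\<forall>x\<in>X. f x < r \<and> x \<in> A (f x))"

lemma pt_mt: "partial_transversal r A X \<longleftrightarrow> (\<exists>f. mt r A X f)"
  unfolding partial_transversal_def mt_def by blast

lemma mt_mono: "mt r A X f \<Longrightarrow> Y \<subseteq> X \<Longrightarrow> mt r A Y f"
  unfolding mt_def by (meson inj_on_subset subsetD)

lemma mt_card: assumes "mt r A X f" shows "finite X \<and> card X \<le> r"
proof -
  have inj: "inj_on f X" and sub: "f ` X \<subseteq> {..<r}" using assms unfolding mt_def by auto
  have "finite (f ` X)" using sub by (rule finite_subset) simp
  hence fX: "finite X" using inj finite_imageD by blast
  have "card X = card (f ` X)" using inj card_image by metis
  also have "\<dots> \<le> r" using sub card_mono[of "{..<r}"] by fastforce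
  finally show ?thesis using fX by simp
qed

lemma inj_upd:
  assumes "inj_on f X" "a \<notin> X" "\<forall>x\<in>X. f x \<noteq> b"
  shows "inj_on (f(a := b)) (insert a X)"
proof -
  have "inj_on (f(a := b)) X" using assms(1,2) by (simp add: inj_on_def)
  moreover have "(f(a := b)) a \<notin> (f(a := b)) ` (X - {a})" using assms(2,3) by auto
  ultimately show ?thesis by (simp add: inj_on_insert)
qed

lemma aug_L:
  assumes "finite X" "mt r A X f" "e \<notin> X"
  shows "(\<exists>g. mt r A (insert e X) g) \<or> (\<exists>R\<subseteq>X. \<forall>j<r. A j \<inter> insert e R \<noteq> {} \<longrightarrow> j \<in> f ` R)"
  using assms
proof (induction "card X" arbitrary: X A f e rule: less_induct)
  case less
  note fin = less.prems(1) and m = less.prems(2) and eX = less.prems(3)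
  show ?case
  proof (rule ccontr)
    assume nc: "\<not> ?case"
    hence nl: "\<not> (\<exists>g. mt r A (insert e X) g)" by blast
    define J where "J = {j. j < r \<and> e \<in> A j}"
    have JX: "\<forall>j\<in>J. j \<in> f ` X"
    proof
      fix j assume j: "j \<in> J"
      show "j \<in> f ` X"
      proof (rule ccontr)
        assume nj: "j \<notin> f ` X"
        have "mt r A (insert e X) (f(e := j))"
          using m j nj eX unfolding mt_def J_def
          by (auto simp: inj_on_def)
        thus False using nl by blast
      qed
    qed
    have "\<forall>j\<in>J. \<exists>R. R \<subseteq> X \<and> j \<in> f ` R \<and> (\<forall>k<r. A k \<inter> R \<noteq> {} \<longrightarrow> k \<in> f ` R)"
    proof
      fix j assume j: "j \<in> J"
      have "j \<in> f ` X" using JX j by simp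
      then obtain x where x: "x \<in> X" "f x = j" by (metis imageE)
      have inj: "inj_on f X" using m unfolding mt_def by blast
      have fne: "\<forall>y\<in>X - {x}. f y \<noteq> j" using inj x unfolding inj_on_def by blast
      have m2: "mt r (A(j := {})) (X - {x}) f"
        using m fne unfolding mt_def by (auto intro: inj_on_subset)
      have cl: "card (X - {x}) < card X" using fin x by (meson card_Diff1_less)
      from less.hyps[OF cl, of "A(j := {})" f x] m2 fin
      have "(\<exists>g. mt r (A(j := {})) (insert x (X - {x})) g) \<or>
            (\<exists>R\<subseteq>X - {x}. \<forall>k<r. (A(j := {})) k \<inter> insert x R \<noteq> {} \<longrightarrow> k \<in> f ` R)"
        by auto
      thus "\<exists>R. R \<subseteq> X \<and> j \<in> f ` R \<and> (\<forall>k<r. A k \<inter> R \<noteq> {} \<longrightarrow> k \<in> f ` R)"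
      proof
        assume "\<exists>g. mt r (A(j := {})) (insert x (X - {x})) g"
        then obtain g where g: "mt r (A(j := {})) X g" using x by (metis insert_Diff)
        have gne: "\<forall>y\<in>X. g y \<noteq> j" using g unfolding mt_def by auto
        have "mt r A (insert e X) (g(e := j))"
        proof -
          have "inj_on (g(e := j)) (insert e X)"
            using g gne eX unfolding mt_def by (simp add: inj_on_def) (metis)
          moreover have "\<forall>y\<in>insert e X. (g(e := j)) y < r \<and> y \<in> A ((g(e := j)) y)"
            using g j eX unfolding mt_def J_def by (auto split: if_splits)
          ultimately show ?thesis unfolding mt_def by blast
        qed
        thus ?thesis using nl by blast
      next
        assume "\<exists>R\<subseteq>X - {x}. \<forall>k<r. (A(j := {})) k \<inter> insert x R \<noteq> {} \<longrightarrow> k \<in> f ` R"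
        then obtain R where R: "R \<subseteq> X - {x}"
          "\<forall>k<r. (A(j := {})) k \<inter> insert x R \<noteq> {} \<longrightarrow> k \<in> f ` R" by blast
        show ?thesis
        proof (intro exI[of _ "insert x R"] conjI allI impI)
          show "insert x R \<subseteq> X" using R x by blast
          show "j \<in> f ` insert x R" using x by blast
          fix k assume k: "k < r" "A k \<inter> insert x R \<noteq> {}"
          show "k \<in> f ` insert x R"
          proof (cases "k = j")
            case True thus ?thesis using x by blast
          next
            case False
            hence "(A(j := {})) k \<inter> insert x R \<noteq> {}" using k by simp
            hence "k \<in> f ` R" using R(2) k by blast
            thus ?thesis by blast
          qed
        qed
      qed
    qed
    hence "\<exists>Rf. \<forall>j\<in>J. Rf j \<subseteq> X \<and> j \<in> f ` Rf j \<and> (\<forall>k<r. A k \<inter> Rf j \<noteq> {} \<longrightarrow> k \<in> f ` Rf j)"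
      by (rule bchoice)
    then obtain Rf where Rf: "\<forall>j\<in>J. Rf j \<subseteq> X \<and> j \<in> f ` Rf j \<and> (\<forall>k<r. A k \<inter> Rf j \<noteq> {} \<longrightarrow> k \<in> f ` Rf j)"
      by (elim exE)
    define R where "R = (\<Union>j\<in>J. Rf j)"
    have "R \<subseteq> X" using Rf unfolding R_def by blast
    moreover have "\<forall>k<r. A k \<inter> insert e R \<noteq> {} \<longrightarrow> k \<in> f ` R"
    proof (intro allI impI)
      fix k assume k: "k < r" "A k \<inter> insert e R \<noteq> {}"
      show "k \<in> f ` R"
      proof (cases "e \<in> A k")
        case True
        hence kJ: "k \<in> J" using k unfolding J_def by blast
        hence "k \<in> f ` Rf k" using Rf by blast
        moreover have "Rf k \<subseteq> R" using kJ unfolding R_def by blast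
        ultimately show ?thesis by blast
      next
        case False
        then obtain j where jJ: "j \<in> J" and "A k \<inter> Rf j \<noteq> {}" using k unfolding R_def by blast
        hence "k \<in> f ` Rf j" using Rf k by blast
        moreover have "Rf j \<subseteq> R" using jJ unfolding R_def by blast
        ultimately show ?thesis by blast
      qed
    qed
    ultimately show False using nc by blast
  qed
qed


lemma aug_L2:
  assumes "finite R" "mt r A R g" "y \<notin> R"
    "\<forall>k<r. A k \<inter> insert y R \<noteq> {} \<longrightarrow> k \<in> g ` R"
    "mt r A S h" "y \<in> S"
  shows "\<exists>z\<in>R - S. \<exists>h'. mt r A (insert z (S - {y})) h'"
  using assms
proof (induction "card R" arbitrary: R A S h y g rule: less_induct)
  case less
  note fin = less.prems(1) and mg = less.prems(2) and yR = less.prems(3)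
    and N = less.prems(4) and mh = less.prems(5) and yS = less.prems(6)
  define k where "k = h y"
  have kr: "k < r" and yk: "y \<in> A k" using mh yS unfolding mt_def k_def by auto
  have "A k \<inter> insert y R \<noteq> {}" using yk by auto
  hence "k \<in> g ` R" using N kr by blast
  then obtain z1 where z1: "z1 \<in> R" "g z1 = k" by (metis imageE)
  have z1k: "z1 \<in> A k" using mg z1 unfolding mt_def by auto
  have injh: "inj_on h S" using mh unfolding mt_def by simp
  have hne: "\<forall>x\<in>S - {y}. h x \<noteq> k" using injh yS unfolding k_def inj_on_def by auto
  have injg: "inj_on g R" using mg unfolding mt_def by simp
  have gne: "\<forall>x\<in>R - {z1}. g x \<noteq> k" using injg z1 unfolding inj_on_def by auto
  show ?case
  proof (cases "z1 \<in> S")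
    case False
    have "inj_on (h(z1 := k)) (insert z1 (S - {y}))"
      using injh hne False unfolding inj_on_def by auto
    moreover have "\<forall>x\<in>insert z1 (S - {y}). (h(z1 := k)) x < r \<and> x \<in> A ((h(z1 := k)) x)"
      using mh False kr z1k unfolding mt_def by auto
    ultimately have "mt r A (insert z1 (S - {y})) (h(z1 := k))" unfolding mt_def by blast
    thus ?thesis using z1 False by blast
  next
    case True
    have z1y: "z1 \<noteq> y" using yR z1 by auto
    define A' where "A' = A(k := {})"
    have cl: "card (R - {z1}) < card R" using fin z1 by (meson card_Diff1_less)
    have mg': "mt r A' (R - {z1}) g"
      using mg gne unfolding mt_def A'_def by (auto intro: inj_on_subset)
    have yR': "z1 \<notin> R - {z1}" by simp
    have N': "\<forall>k'<r. A' k' \<inter> insert z1 (R - {z1}) \<noteq> {} \<longrightarrow> k' \<in> g ` (R - {z1})"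
    proof (intro allI impI)
      fix k' assume k': "k' < r" "A' k' \<inter> insert z1 (R - {z1}) \<noteq> {}"
      have kk: "k' \<noteq> k" using k' unfolding A'_def by auto
      have "insert z1 (R - {z1}) \<subseteq> insert y R" using z1 by auto
      hence "A k' \<inter> insert y R \<noteq> {}" using k' kk unfolding A'_def by auto
      hence "k' \<in> g ` R" using N k' by blast
      thus "k' \<in> g ` (R - {z1})" using kk z1 by auto
    qed
    have mh': "mt r A' (S - {y}) h"
      using mh hne unfolding mt_def A'_def by (auto intro: inj_on_subset)
    have z1S': "z1 \<in> S - {y}" using True z1y by simp
    from less.hyps[OF cl _ mg' yR' N' mh' z1S'] fin
    obtain z h'' where z: "z \<in> (R - {z1}) - (S - {y})"
      and mh'': "mt r A' (insert z (S - {y} - {z1})) h''" by auto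
    have zS: "z \<in> R - S" using z yR by auto
    have zz1: "z \<noteq> z1" using z by simp
    have h''ne: "\<forall>x\<in>insert z (S - {y} - {z1}). h'' x \<noteq> k"
    proof
      fix x assume "x \<in> insert z (S - {y} - {z1})"
      hence "x \<in> A' (h'' x)" using mh'' unfolding mt_def by blast
      thus "h'' x \<noteq> k" unfolding A'_def by auto
    qed
    have injh'': "inj_on h'' (insert z (S - {y} - {z1}))" using mh'' unfolding mt_def by simp
    have eqs: "insert z (S - {y}) = insert z1 (insert z (S - {y} - {z1}))" using z1S' by auto
    have "inj_on (h''(z1 := k)) (insert z1 (insert z (S - {y} - {z1})))"
      by (rule inj_upd[OF injh'' _ h''ne]) (use zz1 in simp)
    moreover have "\<forall>x\<in>insert z1 (insert z (S - {y} - {z1})). (h''(z1 := k)) x < r \<and> x \<in> A ((h''(z1 := k)) x)"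
    proof
      fix x assume x: "x \<in> insert z1 (insert z (S - {y} - {z1}))"
      show "(h''(z1 := k)) x < r \<and> x \<in> A ((h''(z1 := k)) x)"
      proof (cases "x = z1")
        case True thus ?thesis using kr z1k by simp
      next
        case False
        hence "x \<in> insert z (S - {y} - {z1})" using x by simp
        hence "h'' x < r \<and> x \<in> A' (h'' x)" using mh'' unfolding mt_def by blast
        thus ?thesis using False unfolding A'_def by (auto split: if_splits)
      qed
    qed
    ultimately have "mt r A (insert z (S - {y})) (h''(z1 := k))" unfolding mt_def eqs by blast
    thus ?thesis using zS by blast
  qed
qed


lemma ti_mt: "tm_indep E r A X \<longleftrightarrow> X \<subseteq> E \<and> (\<exists>f. mt r A X f)"
  by (simp add: tm_indep_def pt_mt)

lemma rank_set_fin: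
  assumes "finite E" "X \<subseteq> E"
  shows "finite {card Y |Y. Y \<subseteq> X \<and> tm_indep E r A Y}"
    and "{card Y |Y. Y \<subseteq> X \<and> tm_indep E r A Y} \<noteq> {}"
proof -
  have "{card Y |Y. Y \<subseteq> X \<and> tm_indep E r A Y} \<subseteq> card ` Pow X" by blast
  moreover have "finite X" by (rule finite_subset[OF assms(2,1)])
  ultimately show "finite {card Y |Y. Y \<subseteq> X \<and> tm_indep E r A Y}"
    by (meson finite_Pow_iff finite_imageI finite_subset)
  have "mt r A {} (\<lambda>_. 0)" unfolding mt_def by simp
  hence "tm_indep E r A {}" unfolding ti_mt by blast
  thus "{card Y |Y. Y \<subseteq> X \<and> tm_indep E r A Y} \<noteq> {}" by blast
qed

lemma rank_ge:
  assumes "finite E" "X \<subseteq> E" "Y \<subseteq> X" "tm_indep E r A Y"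
  shows "card Y \<le> mrank (tm_indep E r A) X"
  unfolding mrank_def using rank_set_fin[OF assms(1,2)] assms(3,4)
  by (intro Max_ge) blast+

lemma rank_obt:
  assumes "finite E" "X \<subseteq> E"
  shows "\<exists>Y. Y \<subseteq> X \<and> tm_indep E r A Y \<and> mrank (tm_indep E r A) X = card Y"
proof -
  have "mrank (tm_indep E r A) X \<in> {card Y |Y. Y \<subseteq> X \<and> tm_indep E r A Y}"
    unfolding mrank_def using rank_set_fin[OF assms] by (rule Max_in)
  thus ?thesis by blast
qed

lemma rank_le_r:
  assumes "finite E" "X \<subseteq> E"
  shows "mrank (tm_indep E r A) X \<le> r"
proof -
  obtain Y where "Y \<subseteq> X" "tm_indep E r A Y" "mrank (tm_indep E r A) X = card Y"
    using rank_obt[OF assms] by blast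
  hence "\<exists>f. mt r A Y f" unfolding ti_mt by blast
  then obtain f where "mt r A Y f" by blast
  hence "card Y \<le> r" using mt_card by blast
  thus ?thesis using \<open>mrank (tm_indep E r A) X = card Y\<close> by simp
qed

theorem lemma2p7:
  fixes E :: "'a set" and r i :: nat and A :: "nat \<Rightarrow> 'a set" and Bi :: "'a set"
  assumes "finite E"
    and "\<forall>j<r. A j \<subseteq> E"
    and "i < r"
    and "Bi \<subseteq> E"
    and "dual_cl E (tm_indep E r A) Bi = dual_cl E (tm_indep E r A) (A i)"
    and "\<forall>B. B \<subseteq> E \<and> Bi \<subseteq> B \<and> \<not> A i \<subseteq> B \<longrightarrow>
           dual_rank E (tm_indep E r A) B < int (card B) - int (card (calA r A B))"
  shows "tm_indep E r (A(i := Bi)) = tm_indep E r A"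
proof -
  let ?A' = "A(i := Bi)"
  define ind where "ind = tm_indep E r A"
  show ?thesis
  proof (rule ext, rule iffI)
    fix I assume "tm_indep E r ?A' I"
    then obtain g where IE: "I \<subseteq> E" and mg: "mt r ?A' I g" unfolding ti_mt by blast
    have finI: "finite I" by (rule finite_subset[OF IE assms(1)])
    have injg: "inj_on g I" using mg unfolding mt_def by simp
    show "tm_indep E r A I"
    proof (cases "\<exists>y\<in>I. g y = i \<and> y \<notin> A i")
      case False
      have "mt r A I g"
        unfolding mt_def
      proof (intro conjI ballI)
        show "inj_on g I" by (rule injg)
        fix x assume x: "x \<in> I"
        have "g x < r \<and> x \<in> ?A' (g x)" using mg x unfolding mt_def by blast
        thus "g x < r" by simp
        show "x \<in> A (g x)"
        proof (cases "g x = i")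
          case True thus ?thesis using False x by blast
        next
          case False thus ?thesis using \<open>g x < r \<and> x \<in> ?A' (g x)\<close> by simp
        qed
      qed
      thus ?thesis using IE unfolding ti_mt by blast
    next
      case True
      then obtain y0 where y0: "y0 \<in> I" "g y0 = i" "y0 \<notin> A i" by blast
      have y0B: "y0 \<in> Bi" using mg y0 unfolding mt_def by force
      have gne: "\<forall>x\<in>I - {y0}. g x \<noteq> i" using injg y0 unfolding inj_on_def by blast
      have mX: "mt r A (I - {y0}) g"
        unfolding mt_def
      proof (intro conjI ballI)
        show "inj_on g (I - {y0})" using injg by (rule inj_on_subset) blast
        fix x assume x: "x \<in> I - {y0}"
        have "g x < r \<and> x \<in> ?A' (g x)" using mg x unfolding mt_def by blast
        moreover have "g x \<noteq> i" using gne x by blast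
        ultimately show "g x < r" "x \<in> A (g x)" by auto
      qed
      have "finite (I - {y0})" using finI by simp
      from aug_L[OF this mX, of y0]
      have "(\<exists>g. mt r A I g) \<or> (\<exists>R\<subseteq>I - {y0}. \<forall>j<r. A j \<inter> insert y0 R \<noteq> {} \<longrightarrow> j \<in> g ` R)"
        using y0(1) by (simp add: insert_absorb)
      thus ?thesis
      proof
        assume "\<exists>g. mt r A I g" thus ?thesis using IE unfolding ti_mt by blast
      next
        assume "\<exists>R\<subseteq>I - {y0}. \<forall>j<r. A j \<inter> insert y0 R \<noteq> {} \<longrightarrow> j \<in> g ` R"
        then obtain R where RI: "R \<subseteq> I - {y0}"
          and N: "\<forall>j<r. A j \<inter> insert y0 R \<noteq> {} \<longrightarrow> j \<in> g ` R" by blast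
        have AiR: "A i \<inter> insert y0 R = {}"
        proof (rule ccontr)
          assume "A i \<inter> insert y0 R \<noteq> {}"
          hence "i \<in> g ` R" using N assms(3) by blast
          then obtain x where "x \<in> R" "g x = i" by blast
          thus False using gne RI by blast
        qed
        have finR: "finite R" using RI by (intro finite_subset[OF _ finI]) blast
        have mR: "mt r A R g" using mX RI by (rule mt_mono)
        have y0R: "y0 \<notin> R" using RI by blast
        have y0E: "y0 \<in> E" using IE y0 by blast
        have "y0 \<in> dual_cl E ind Bi" unfolding dual_cl_def using y0E y0B
          by (simp add: insert_absorb)
        hence "y0 \<in> dual_cl E ind (A i)" using assms(5) unfolding ind_def by simp
        hence dreq: "dual_rank E ind (insert y0 (A i)) = dual_rank E ind (A i)"
          unfolding dual_cl_def by simp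
        have AiE: "A i \<subseteq> E" using assms(2,3) by blast
        have finAi: "finite (A i)" by (rule finite_subset[OF AiE assms(1)])
        have cAi: "card (insert y0 (A i)) = card (A i) + 1" using finAi y0(3) by simp
        have Eeq: "E - insert y0 (A i) = E - A i - {y0}" by blast
        have key: "int (mrank ind (E - A i - {y0})) + 1 = int (mrank ind (E - A i))"
          using dreq cAi unfolding dual_rank_def Eeq by simp
        obtain S where S: "S \<subseteq> E - A i" "ind S" "mrank ind (E - A i) = card S"
          using rank_obt[OF assms(1), of "E - A i" r A] unfolding ind_def by blast
        have "card S \<le> mrank ind (E - A i - {y0})"
        proof (cases "y0 \<in> S")
          case False
          hence S1: "S \<subseteq> E - A i - {y0}" using S by blast
          have S2: "tm_indep E r A S" using S(2) unfolding ind_def .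
          have "E - A i - {y0} \<subseteq> E" by blast
          from rank_ge[OF assms(1) this S1 S2] show ?thesis unfolding ind_def .
        next
          case True
          obtain h where mh: "mt r A S h" using S unfolding ind_def ti_mt by blast
          from aug_L2[OF finR mR y0R N mh True]
          obtain z h' where z: "z \<in> R - S" and mh': "mt r A (insert z (S - {y0})) h'" by blast
          have zE: "z \<in> E" using z RI IE by blast
          have zA: "z \<notin> A i" using AiR z by blast
          have zy: "z \<noteq> y0" using y0R z by blast
          have sub: "insert z (S - {y0}) \<subseteq> E - A i - {y0}" using S zE zA zy by blast
          have ind': "ind (insert z (S - {y0}))" using mh' sub unfolding ind_def ti_mt by blast
          have finS: "finite S" using S(1) by (intro finite_subset[OF _ assms(1)]) blast
          have "card (insert z (S - {y0})) = card (S - {y0}) + 1" using finS z by simp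
          also have "\<dots> = card S" using card_Suc_Diff1[OF finS True] by simp
          finally have "card (insert z (S - {y0})) = card S" .
          moreover have "card (insert z (S - {y0})) \<le> mrank ind (E - A i - {y0})"
          proof -
            have "E - A i - {y0} \<subseteq> E" by blast
            from rank_ge[OF assms(1) this sub] ind' show ?thesis unfolding ind_def by simp
          qed
          ultimately show ?thesis by simp
        qed
        thus ?thesis using key S(3) by linarith
      qed
    qed
  next
    fix I assume "tm_indep E r A I"
    then obtain f where IE: "I \<subseteq> E" and mf: "mt r A I f" unfolding ti_mt by blast
    have finI: "finite I" by (rule finite_subset[OF IE assms(1)])
    have injf: "inj_on f I" using mf unfolding mt_def by simp
    show "tm_indep E r ?A' I"
    proof (cases "\<exists>e\<in>I. f e = i \<and> e \<notin> Bi")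
      case False
      have "mt r ?A' I f"
        unfolding mt_def
      proof (intro conjI ballI)
        show "inj_on f I" by (rule injf)
        fix x assume x: "x \<in> I"
        have fx: "f x < r \<and> x \<in> A (f x)" using mf x unfolding mt_def by blast
        thus "f x < r" by simp
        show "x \<in> ?A' (f x)"
        proof (cases "f x = i")
          case True thus ?thesis using False x by simp
        next
          case False thus ?thesis using fx by simp
        qed
      qed
      thus ?thesis using IE unfolding ti_mt by blast
    next
      case True
      then obtain e where e: "e \<in> I" "f e = i" "e \<notin> Bi" by blast
      have fne: "\<forall>x\<in>I - {e}. f x \<noteq> i" using injf e unfolding inj_on_def by blast
      have mX: "mt r ?A' (I - {e}) f"
        unfolding mt_def
      proof (intro conjI ballI)
        show "inj_on f (I - {e})" using injf by (rule inj_on_subset) blast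
        fix x assume x: "x \<in> I - {e}"
        have "f x < r \<and> x \<in> A (f x)" using mf x unfolding mt_def by blast
        moreover have "f x \<noteq> i" using fne x by blast
        ultimately show "f x < r" "x \<in> ?A' (f x)" by auto
      qed
      have "finite (I - {e})" using finI by simp
      from aug_L[OF this mX, of e]
      have "(\<exists>g. mt r ?A' I g) \<or> (\<exists>R\<subseteq>I - {e}. \<forall>j<r. ?A' j \<inter> insert e R \<noteq> {} \<longrightarrow> j \<in> f ` R)"
        using e(1) by (simp add: insert_absorb)
      thus ?thesis
      proof
        assume "\<exists>g. mt r ?A' I g" thus ?thesis using IE unfolding ti_mt by blast
      next
        assume "\<exists>R\<subseteq>I - {e}. \<forall>j<r. ?A' j \<inter> insert e R \<noteq> {} \<longrightarrow> j \<in> f ` R"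
        then obtain R where RI: "R \<subseteq> I - {e}"
          and N: "\<forall>j<r. ?A' j \<inter> insert e R \<noteq> {} \<longrightarrow> j \<in> f ` R" by blast
        define Y where "Y = insert e R"
        have YI: "Y \<subseteq> I" using RI e unfolding Y_def by blast
        have YE: "Y \<subseteq> E" using YI IE by blast
        have BY: "Bi \<inter> Y = {}"
        proof (rule ccontr)
          assume "Bi \<inter> Y \<noteq> {}"
          hence "?A' i \<inter> insert e R \<noteq> {}" unfolding Y_def by simp
          hence "i \<in> f ` R" using N assms(3) by blast
          then obtain x where "x \<in> R" "f x = i" by blast
          thus False using fne RI by blast
        qed
        have NY: "\<forall>j<r. A j \<inter> Y \<noteq> {} \<longrightarrow> j \<in> f ` Y"
        proof (intro allI impI)
          fix j assume j: "j < r" "A j \<inter> Y \<noteq> {}"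
          show "j \<in> f ` Y"
          proof (cases "j = i")
            case True thus ?thesis using e unfolding Y_def by blast
          next
            case False
            hence "?A' j \<inter> insert e R \<noteq> {}" using j unfolding Y_def by simp
            hence "j \<in> f ` R" using N j by blast
            thus ?thesis unfolding Y_def by blast
          qed
        qed
        define B where "B = E - Y"
        have eAi: "e \<in> A i" using mf e unfolding mt_def by force
        have "B \<subseteq> E \<and> Bi \<subseteq> B \<and> \<not> A i \<subseteq> B"
          using assms(4) BY eAi unfolding B_def Y_def by blast
        hence lt: "dual_rank E ind B < int (card B) - int (card (calA r A B))"
          using assms(6) unfolding ind_def by blast
        have EB: "E - B = Y" using YE unfolding B_def by blast
        have dr: "dual_rank E ind B = int (card B) + int (mrank ind Y) - int (mrank ind E)"
          unfolding dual_rank_def EB by simp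
        have mY: "mt r A Y f" using mf YI by (rule mt_mono)
        have "tm_indep E r A Y" using mY YE unfolding ti_mt by blast
        hence rY: "card Y \<le> mrank ind Y"
          using rank_ge[OF assms(1) YE subset_refl] unfolding ind_def by blast
        have rE: "mrank ind E \<le> r" using rank_le_r[OF assms(1)] unfolding ind_def by blast
        have cY: "card (f ` Y) = card Y" using inj_on_subset[OF injf YI] card_image by blast
        have cYr: "card Y \<le> r" using mt_card[OF mY] by simp
        have fYr: "f ` Y \<subseteq> {..<r}" using mY unfolding mt_def by auto
        have sub: "{..<r} - f ` Y \<subseteq> calA r A B"
        proof
          fix j assume j: "j \<in> {..<r} - f ` Y"
          hence "A j \<inter> Y = {}" using NY by blast
          moreover have "A j \<subseteq> E" using assms(2) j by blast
          ultimately show "j \<in> calA r A B" using j unfolding calA_def B_def by blast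
        qed
        have "finite (calA r A B)" unfolding calA_def by simp
        hence "card ({..<r} - f ` Y) \<le> card (calA r A B)" using card_mono[OF _ sub] by blast
        moreover have "card ({..<r} - f ` Y) = r - card (f ` Y)"
          using card_Diff_subset[OF finite_subset[OF fYr finite_lessThan] fYr] by simp
        ultimately have cA: "r - card Y \<le> card (calA r A B)" using cY by simp
        show ?thesis using lt dr rY rE cA cYr by linarith
      qed
    qed
  qed
qed

end
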